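(* Let $p,q\in\mathbb N$ and $\bm P\in\{0,1\}^{p\times q}$ be such that every row and every column of $\bm P$ contains at most one entry equal to $1$. Then $\textsc{FindCounterpart}(\bm P)$ equals the zero vector $\bm 0\in\mathbb R^p$ if $\bm P$ is the zero matrix, and otherwise equals the leftmost column of $\bm P$ that contains an entry $1$.
   Context: $\textsc{FindCounterpart}(\bm P)$ for $\bm P\in\mathbb R^{p\times q}$ is computed as follows: let $\bm c\in\mathbb R^q$ with $c_j=\sum_{i=1}^pP_{ij}$ (column sums); replace $\bm c$ by its cumulative sum, $c_j\leftarrow\sum_{l=1}^jc_l$; apply elementwise the triangle window $\mathrm{tw}(x)=0$ if $x\le0$, $x$ if $0<x\le1$, $2-x$ if $1<x\le2$, $0$ if $x>2$; return the column vector $\bm P\bm c^\top\in\mathbb R^p$. *)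

theory Defs
  imports Complex_Main "Jordan_Normal_Form.Matrix"
begin

definition tw :: "real \<Rightarrow> real" where
  "tw x = (if x \<le> 0 then 0 else if x \<le> 1 then x else if x \<le> 2 then 2 - x else 0)"

definition find_counterpart :: "real mat \<Rightarrow> real vec" where
  "find_counterpart P =
     P *\<^sub>v vec (dim_col P)
       (\<lambda>j. tw (\<Sum>l\<le>j. \<Sum>i<dim_row P. P $$ (i, l)))"

end

theory Submission
  imports Defs
begin

theorem proposition7:
  fixes p q :: nat and P :: "real mat"
  assumes "P \<in> carrier_mat p q"
    and "\<forall>i<p. \<forall>j<q. P $$ (i, j) \<in> {0, 1}"
    and "\<forall>i<p. card {j. j < q \<and> P $$ (i, j) = 1} \<le> 1"
    and "\<forall>j<q. card {i. i < p \<and> P $$ (i, j) = 1} \<le> 1"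
  shows "find_counterpart P =
           (if P = 0\<^sub>m p q then 0\<^sub>v p
            else col P (LEAST j. j < q \<and> (\<exists>i<p. P $$ (i, j) = 1)))"
proof -
  have dr: "dim_row P = p" and dc: "dim_col P = q" using assms(1) by auto
  define s where "s l = (\<Sum>i<p. P $$ (i, l))" for l
  define C where "C j = (\<Sum>l\<le>j. s l)" for j
  define c where "c = vec q (\<lambda>j. tw (C j))"
  have fc: "find_counterpart P = P *\<^sub>v c"
    unfolding find_counterpart_def c_def C_def s_def dr dc ..
  have s_eq: "s l = (if \<exists>i<p. P $$ (i, l) = 1 then 1 else 0)" if "l < q" for l
  proof -
    have "s l = (\<Sum>i<p. if P $$ (i, l) = 1 then 1 else 0)"
      unfolding s_def using assms(2) \<open>l < q\<close> by (intro sum.cong) auto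
    also have "\<dots> = real (card {i. i < p \<and> P $$ (i, l) = 1})"
      by (simp add: sum.If_cases lessThan_def Collect_conj_eq[symmetric] conj_commute)
    finally have 1: "s l = real (card {i. i < p \<and> P $$ (i, l) = 1})" .
    show ?thesis
    proof (cases "\<exists>i<p. P $$ (i, l) = 1")
      case True
      then have "card {i. i < p \<and> P $$ (i, l) = 1} \<noteq> 0" by auto
      moreover have "card {i. i < p \<and> P $$ (i, l) = 1} \<le> 1"
        using assms(4) \<open>l < q\<close> by blast
      ultimately have "card {i. i < p \<and> P $$ (i, l) = 1} = 1"
        by linarith
      with 1 True show ?thesis by simp
    next
      case False
      then have "{i. i < p \<and> P $$ (i, l) = 1} = {}" by auto
      with 1 False show ?thesis by simp
    qed
  qed
  have s_nn: "s l \<ge> 0" if "l < q" for l using s_eq[OF that] by simp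
  show ?thesis
  proof (cases "P = 0\<^sub>m p q")
    case True
    show ?thesis unfolding fc using True dr
      by (intro eq_vecI) (auto simp: scalar_prod_def c_def)
  next
    case False
    then obtain i j where ij: "i < p" "j < q" "P $$ (i, j) \<noteq> 0"
      using assms(1) by (metis carrier_matD eq_matI index_zero_mat(1,2,3))
    then have ex: "\<exists>j. j < q \<and> (\<exists>i<p. P $$ (i, j) = 1)" using assms(2) by force
    define j0 where "j0 = (LEAST j. j < q \<and> (\<exists>i<p. P $$ (i, j) = 1))"
    have j0: "j0 < q" "\<exists>i<p. P $$ (i, j0) = 1"
      using LeastI_ex[OF ex] unfolding j0_def by auto
    have j0min: "\<not> (\<exists>i<p. P $$ (i, j) = 1)" if "j < j0" for j
      using not_less_Least[OF that[unfolded j0_def]] that j0(1) unfolding j0_def by auto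
    have Cj0: "C j0 = 1"
    proof -
      have "C j0 = (\<Sum>l\<le>j0. if l = j0 then 1 else 0)"
        unfolding C_def
      proof (intro sum.cong refl)
        fix l assume "l \<in> {..j0}"
        then have "l \<le> j0" by simp
        then show "s l = (if l = j0 then 1 else 0)"
          using s_eq[of l] j0 j0min[of l] by (cases "l = j0") auto
      qed
      then show ?thesis by simp
    qed
    have Cbig: "C j \<ge> 2" if "j0 < j" "j < q" "\<exists>i<p. P $$ (i, j) = 1" for j
    proof -
      have "C j \<ge> (\<Sum>l\<in>{j0, j}. s l)"
        unfolding C_def using that s_nn
        by (intro sum_mono2) auto
      also have "(\<Sum>l\<in>{j0, j}. s l) = 2" using that s_eq[of j] s_eq[of j0] j0 by auto
      finally show ?thesis .
    qed
    have trm: "P $$ (i, j) * tw (C j) = (if j = j0 then P $$ (i, j0) else 0)"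
      if "i < p" "j < q" for i j
    proof (cases "j = j0")
      case True then show ?thesis using Cj0 by (simp add: tw_def)
    next
      case ne: False
      show ?thesis
      proof (cases "P $$ (i, j) = 1")
        case True
        with that have ex1: "\<exists>i<p. P $$ (i, j) = 1" by auto
        with j0min have "\<not> j < j0" by blast
        with ne have "j0 < j" by simp
        from Cbig[OF this that(2) ex1] have "tw (C j) = 0" by (simp add: tw_def)
        then show ?thesis using ne by simp
      next
        case False
        then have "P $$ (i, j) = 0" using assms(2) that by auto
        then show ?thesis using ne by simp
      qed
    qed
    have "P *\<^sub>v c = col P j0"
    proof (intro eq_vecI)
      show "dim_vec (P *\<^sub>v c) = dim_vec (col P j0)" by simp
    next
      fix i assume "i < dim_vec (col P j0)"
      then have i: "i < p" using dr by simp
      have "(P *\<^sub>v c) $ i = (\<Sum>j\<in>{0..<q}. P $$ (i, j) * tw (C j))"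
        using i dr dc by (auto simp: scalar_prod_def c_def intro!: sum.cong)
      also have "\<dots> = (\<Sum>j\<in>{0..<q}. if j = j0 then P $$ (i, j0) else 0)"
        using trm i by (intro sum.cong) auto
      also have "\<dots> = P $$ (i, j0)" using j0(1) by simp
      also have "\<dots> = col P j0 $ i" using i j0(1) dr dc by simp
      finally show "(P *\<^sub>v c) $ i = col P j0 $ i" .
    qed
    then show ?thesis using False fc unfolding j0_def by simp
  qed
qed

end
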